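(* Let $\Gamma$ be a weighted digraph with vertex set $\{1,\dots,n\}$, $n>1$, without loops and with strictly positive arc weights, with Laplacian matrix $L$, matrices of in-forests $Q_k$ and in-forest weights $\sigma_k$. Then for every $k=0,1,2,\dots$, $$Q_{k+1}=(-L)Q_k+\sigma_{k+1}I,\qquad \sigma_{k+1}=\frac{\operatorname{tr}(LQ_k)}{k+1}.$$
   Context: $W=(w_{ij})$ is the matrix of arc weights ($w_{ij}>0$ iff there is an arc $i\to j$, else $0$). The Laplacian $L=(\ell_{ij})$: $\ell_{ij}=-w_{ij}$ for $j\ne i$, $\ell_{ii}=\sum_{k\ne i}w_{ik}$. The weight of a subgraph is the product of its arc weights (1 if no arcs); the weight of a set of subgraphs is the sum of their weights (0 for the empty set). A converging tree is a weakly connected digraph with one vertex (the root) of outdegree 0 and all others of outdegree 1; an in-forest is a spanning subgraph of $\Gamma$ whose weak components are converging trees. $\sigma_k$ is the total weight of in-forests of $\Gamma$ with $k$ arcs ($\sigma_0=1$, and $\sigma_k=0$ when no such in-forest exists). $Q_k=(q^k_{ij})$ where $q^k_{ij}$ is the total weight of in-forests with $k$ arcs in which $i$ lies in a tree rooted at $j$ ($Q_0=I$, and $Q_k=0$ when no in-forest with $k$ arcs exists). *)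

theory Defs
  imports "HOL-Analysis.Analysis"
begin

text \<open>Weighted digraph on the finite vertex type 'n, given by its weight matrix W.
  Arcs are the pairs (i,j) with W i j nonzero.\<close>

definition arcs :: "real^'n^'n \<Rightarrow> ('n \<times> 'n) set" where
  "arcs W = {(i,j). W $ i $ j \<noteq> 0}"

definition laplacian :: "real^'n^'n \<Rightarrow> real^'n^'n" where
  "laplacian W = (\<chi> i j. if i = j then (\<Sum>k\<in>UNIV - {i}. W $ i $ k) else - W $ i $ j)"

definition sg_weight :: "real^'n^'n \<Rightarrow> ('n \<times> 'n) set \<Rightarrow> real" where
  "sg_weight W F = (\<Prod>(i,j)\<in>F. W $ i $ j)"

definition outdeg :: "('n \<times> 'n) set \<Rightarrow> 'n \<Rightarrow> nat" where
  "outdeg F v = card {j. (v,j) \<in> F}"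

definition weak_comp :: "('n \<times> 'n) set \<Rightarrow> 'n \<Rightarrow> 'n set" where
  "weak_comp F i = (F \<union> F\<inverse>)\<^sup>* `` {i}"

definition converging_tree :: "('n \<times> 'n) set \<Rightarrow> 'n set \<Rightarrow> bool" where
  "converging_tree F C \<longleftrightarrow>
     (\<exists>!r. r \<in> C \<and> outdeg F r = 0) \<and> (\<forall>v\<in>C. outdeg F v \<le> 1)"

definition in_forest :: "real^'n^'n \<Rightarrow> ('n \<times> 'n) set \<Rightarrow> bool" where
  "in_forest W F \<longleftrightarrow> F \<subseteq> arcs W \<and> (\<forall>i. converging_tree F (weak_comp F i))"

definition sigma :: "real^'n^'n \<Rightarrow> nat \<Rightarrow> real" where
  "sigma W k = (\<Sum>F\<in>{F. in_forest W F \<and> card F = k}. sg_weight W F)"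

text \<open>Q k: entry (i,j) is the total weight of in-forests with k arcs in which
  i lies in a tree rooted at j.\<close>
definition Qmat :: "real^'n^'n \<Rightarrow> nat \<Rightarrow> real^'n^'n" where
  "Qmat W k = (\<chi> i j. \<Sum>F\<in>{F. in_forest W F \<and> card F = k \<and>
                               j \<in> weak_comp F i \<and> outdeg F j = 0}. sg_weight W F)"

end

theory Submission
  imports Defs
begin


definition fr :: "('a \<times> 'a) set \<Rightarrow> bool" where
  "fr F \<longleftrightarrow> single_valued F \<and> (\<forall>v. \<exists>r. (v,r) \<in> F\<^sup>* \<and> r \<notin> Domain F)"

lemma root_unique:
  assumes sv: "single_valued F" and "(v,r1) \<in> F\<^sup>*" "(v,r2) \<in> F\<^sup>*"
    and n1: "r1 \<notin> Domain F" and n2: "r2 \<notin> Domain F"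
  shows "r1 = r2"
  using assms(2,3)
proof (induction v rule: converse_rtrancl_induct)
  case base
  then show ?case using n1 by (metis DomainI converse_rtranclE)
next
  case (step v y)
  show ?case
  proof (cases "v = r2")
    case True then show ?thesis using step.hyps(1) n2 by blast
  next
    case False
    then obtain z where "(v,z) \<in> F" "(z,r2) \<in> F\<^sup>*" using step.prems by (metis converse_rtranclE)
    with step.hyps(1) sv have "z = y" by (auto simp: single_valued_def)
    then show ?thesis using step.IH \<open>(z,r2) \<in> F\<^sup>*\<close> by simp
  qed
qed

definition rt :: "('a \<times> 'a) set \<Rightarrow> 'a \<Rightarrow> 'a" where
  "rt F v = (THE r. (v,r) \<in> F\<^sup>* \<and> r \<notin> Domain F)"

lemma rt_eq: "single_valued F \<Longrightarrow> (v,r) \<in> F\<^sup>* \<Longrightarrow> r \<notin> Domain F \<Longrightarrow> rt F v = r"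
  unfolding rt_def by (rule the_equality) (auto intro: root_unique)

lemma rt: "fr F \<Longrightarrow> (v, rt F v) \<in> F\<^sup>* \<and> rt F v \<notin> Domain F"
  unfolding fr_def by (metis rt_eq)

lemma rt_self: "fr F \<Longrightarrow> v \<notin> Domain F \<Longrightarrow> rt F v = v"
  unfolding fr_def by (metis rt_eq rtrancl.rtrancl_refl)

lemma rt_step: "fr F \<Longrightarrow> (u,w) \<in> F \<Longrightarrow> rt F u = rt F w"
  by (metis converse_rtrancl_into_rtrancl fr_def rt rt_eq)

lemma rt_comp: assumes "fr F" "(u,w) \<in> (F \<union> F\<inverse>)\<^sup>*" shows "rt F u = rt F w"
  using assms(2)
proof (induction rule: rtrancl_induct)
  case base then show ?case by simp
next
  case (step y z)
  then show ?case using rt_step[OF assms(1)] by auto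
qed

lemma reach:
  assumes sv: "single_valued F" and r: "r \<notin> Domain F" and "(r,u) \<in> (F \<union> F\<inverse>)\<^sup>*"
  shows "(u,r) \<in> F\<^sup>*"
  using assms(3)
proof (induction rule: rtrancl_induct)
  case base then show ?case by simp
next
  case (step u w)
  show ?case
  proof (cases "(u,w) \<in> F")
    case True
    then have "u \<noteq> r" using r by blast
    then obtain y where "(u,y) \<in> F" "(y,r) \<in> F\<^sup>*" using step.IH by (metis converse_rtranclE)
    with True sv have "y = w" by (auto simp: single_valued_def)
    then show ?thesis using \<open>(y,r) \<in> F\<^sup>*\<close> by simp
  next
    case False
    then have "(w,u) \<in> F" using step.hyps by auto
    then show ?thesis using step.IH by (meson converse_rtrancl_into_rtrancl)
  qed
qed

lemma cycle:
  assumes sv: "single_valued F" and "(x,r) \<in> F\<^sup>*" and "(x,x) \<in> F\<^sup>+"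
  shows "r \<in> Domain F"
  using assms(2,3)
proof (induction x rule: converse_rtrancl_induct)
  case base then show ?case by (auto dest: tranclD)
next
  case (step x y)
  from step.prems obtain z where z: "(x,z) \<in> F" "(z,x) \<in> F\<^sup>*" by (meson tranclD)
  with step.hyps(1) sv have "z = y" by (auto simp: single_valued_def)
  then have "(y,y) \<in> F\<^sup>+" using z step.hyps(1) by (meson rtrancl_into_trancl1)
  then show ?case using step.IH by blast
qed

lemma insert_fr:
  assumes G: "fr G" and i: "i \<notin> Domain G" and p: "rt G p \<noteq> i"
  shows "fr (insert (i,p) G)"
    and "rt (insert (i,p) G) v = (if rt G v = i then rt G p else rt G v)"
proof -
  let ?G = "insert (i,p) G"
  have sv: "single_valued ?G" using G i unfolding fr_def single_valued_def by blast
  have sub: "G\<^sup>* \<subseteq> ?G\<^sup>*" by (rule rtrancl_mono) blast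
  have main: "(v, if rt G v = i then rt G p else rt G v) \<in> ?G\<^sup>* \<and>
        (if rt G v = i then rt G p else rt G v) \<notin> Domain ?G" for v
  proof (cases "rt G v = i")
    case True
    have "(v,i) \<in> ?G\<^sup>*" using rt[OF G, of v] True sub by auto
    moreover have "(p, rt G p) \<in> ?G\<^sup>*" using rt[OF G, of p] sub by auto
    ultimately have "(v, rt G p) \<in> ?G\<^sup>*"
      by (meson insertI1 rtrancl_into_rtrancl rtrancl_trans)
    moreover have "rt G p \<notin> Domain ?G" using rt[OF G, of p] p by auto
    ultimately show ?thesis using True by simp
  next
    case False
    then show ?thesis using rt[OF G, of v] sub by auto
  qed
  show "fr ?G" unfolding fr_def using sv main by blast
  show "rt ?G v = (if rt G v = i then rt G p else rt G v)"
    using rt_eq[OF sv conjunct1[OF main[of v]] conjunct2[OF main[of v]]] .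
qed

lemma remove_fr:
  assumes F: "fr F" and ip: "(i,p) \<in> F"
  shows "fr (F - {(i,p)})" "i \<notin> Domain (F - {(i,p)})" "rt (F - {(i,p)}) p \<noteq> i"
proof -
  let ?G = "F - {(i,p)}"
  have sv: "single_valued F" using F fr_def by blast
  then have svG: "single_valued ?G" unfolding single_valued_def by blast
  show iD: "i \<notin> Domain ?G" using sv ip unfolding single_valued_def by blast
  have ex: "\<exists>r'. (v,r') \<in> ?G\<^sup>* \<and> r' \<notin> Domain ?G" if "(v,r) \<in> F\<^sup>*" "r \<notin> Domain F" for v r
    using that(1)
  proof (induction v rule: converse_rtrancl_induct)
    case base then show ?case using that(2) by blast
  next
    case (step v w)
    show ?case
    proof (cases "(v,w) = (i,p)")
      case True then show ?thesis using iD by blast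
    next
      case False
      then have "(v,w) \<in> ?G" using step.hyps by blast
      then show ?thesis using step.IH by (meson converse_rtrancl_into_rtrancl)
    qed
  qed
  have "\<forall>v. \<exists>r'. (v,r') \<in> ?G\<^sup>* \<and> r' \<notin> Domain ?G"
    using ex rt[OF F] by blast
  then show "fr ?G" using svG fr_def by blast
  show "rt ?G p \<noteq> i"
  proof
    assume "rt ?G p = i"
    then have "(p,i) \<in> ?G\<^sup>*" using rt[OF \<open>fr ?G\<close>, of p] by simp
    then have "(p,i) \<in> F\<^sup>*" by (meson Diff_subset rtrancl_mono subsetD)
    then have "(i,i) \<in> F\<^sup>+" using ip by (meson rtrancl_into_trancl2)
    then show False using cycle[OF sv conjunct1[OF rt[OF F, of i]]] rt[OF F, of i] by blast
  qed
qed



lemma outdeg0: "outdeg F v = 0 \<longleftrightarrow> v \<notin> Domain F" for F :: "('n::finite \<times> 'n) set"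
  unfolding outdeg_def by auto

lemma sv_outdeg: "single_valued F \<longleftrightarrow> (\<forall>v. outdeg F v \<le> 1)" for F :: "('n::finite \<times> 'n) set"
  unfolding outdeg_def single_valued_def One_nat_def card_le_Suc0_iff_eq[OF finite] by blast

lemma in_forest_iff: "in_forest W F \<longleftrightarrow> F \<subseteq> arcs W \<and> fr F"
proof
  assume H: "in_forest W F"
  have ct: "converging_tree F (weak_comp F v)" for v using H in_forest_def by blast
  have vin: "v \<in> weak_comp F v" for v by (simp add: weak_comp_def)
  have sv: "single_valued F" unfolding sv_outdeg
  proof
    fix v from ct[of v] vin[of v] show "outdeg F v \<le> 1" unfolding converging_tree_def by blast
  qed
  have "\<exists>r. (v,r) \<in> F\<^sup>* \<and> r \<notin> Domain F" for v
  proof -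
    from ct[of v] obtain r where r: "r \<in> weak_comp F v" "outdeg F r = 0"
      unfolding converging_tree_def by blast
    then have "(v,r) \<in> (F \<union> F\<inverse>)\<^sup>*" by (simp add: weak_comp_def)
    then have "(r,v) \<in> ((F \<union> F\<inverse>)\<inverse>)\<^sup>*" by (rule rtrancl_converseI)
    moreover have "(F \<union> F\<inverse>)\<inverse> = F \<union> F\<inverse>" by auto
    ultimately have "(r,v) \<in> (F \<union> F\<inverse>)\<^sup>*" by simp
    then have "(v,r) \<in> F\<^sup>*" using reach[OF sv] r(2) outdeg0 by blast
    then show ?thesis using r(2) outdeg0 by blast
  qed
  then show "F \<subseteq> arcs W \<and> fr F" using H sv unfolding in_forest_def fr_def by blast
next
  assume H: "F \<subseteq> arcs W \<and> fr F"
  then have F: "fr F" by blast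
  have sv: "single_valued F" using F fr_def by blast
  have "converging_tree F (weak_comp F i)" for i
  proof -
    have "rt F i \<in> weak_comp F i"
      using rt[OF F, of i] unfolding weak_comp_def
      by (metis Image_singleton_iff in_rtrancl_UnI)
    moreover have "outdeg F (rt F i) = 0" using rt[OF F, of i] outdeg0 by blast
    moreover have "r = rt F i" if "r \<in> weak_comp F i" "outdeg F r = 0" for r
    proof -
      have "rt F i = rt F r" using rt_comp[OF F] that(1) by (simp add: weak_comp_def)
      also have "\<dots> = r" using rt_self[OF F] that(2) outdeg0 by blast
      finally show ?thesis by simp
    qed
    ultimately show ?thesis unfolding converging_tree_def using sv sv_outdeg by blast
  qed
  then show "in_forest W F" using H in_forest_def by blast
qed

lemma root_cond1: "fr F \<Longrightarrow> j \<in> weak_comp F i \<Longrightarrow> outdeg F j = 0 \<Longrightarrow> rt F i = j"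
  for F :: "('n::finite \<times> 'n) set"
proof -
  assume F: "fr F" and j: "j \<in> weak_comp F i" "outdeg F j = 0"
  have "rt F i = rt F j" using rt_comp[OF F, of i j] j(1) by (simp add: weak_comp_def)
  also have "\<dots> = j" using rt_self[OF F, of j] j(2) outdeg0 by blast
  finally show ?thesis .
qed

lemma root_cond2: "fr F \<Longrightarrow> rt F i \<in> weak_comp F i \<and> outdeg F (rt F i) = 0"
  for F :: "('n::finite \<times> 'n) set"
  using rt[of F i] outdeg0 unfolding weak_comp_def
  by (metis Image_singleton_iff in_rtrancl_UnI)

definition FS :: "real^'n^'n \<Rightarrow> nat \<Rightarrow> ('n \<times> 'n) set set" where
  "FS W k = {F. F \<subseteq> arcs W \<and> fr F \<and> card F = k}"

lemma finite_FS[simp]: "finite (FS W k)" by simp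

lemma sigma_eq: "sigma W k = (\<Sum>F\<in>FS W k. sg_weight W F)"
  unfolding sigma_def FS_def by (simp add: in_forest_iff conj_assoc)

lemma Q_eq: "Qmat W k $ i $ j = (\<Sum>F\<in>FS W k. if rt F i = j then sg_weight W F else 0)"
proof -
  have "{F. in_forest W F \<and> card F = k \<and> j \<in> weak_comp F i \<and> outdeg F j = 0} = {F\<in>FS W k. rt F i = j}"
    by (auto simp: FS_def in_forest_iff root_cond1 root_cond2)
  then show ?thesis unfolding Qmat_def by (simp add: sum.inter_filter)
qed

lemma pp_mem: assumes "fr F" "i \<in> Domain F" shows "(i, THE p. (i,p) \<in> F) \<in> F"
proof -
  have "\<exists>!p. (i,p) \<in> F" using assms unfolding fr_def single_valued_def by blast
  then show ?thesis by (rule theI')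
qed

lemma decomp:
  fixes W :: "real^'n^'n" and h :: "('n \<times> 'n) set \<Rightarrow> 'b::comm_monoid_add"
  shows "(\<Sum>F\<in>{F\<in>FS W (Suc k). i \<in> Domain F}. h F) =
     (\<Sum>(G,p)\<in>Sigma {G\<in>FS W k. i \<notin> Domain G} (\<lambda>G. {p. (i,p) \<in> arcs W \<and> rt G p \<noteq> i}).
         h (insert (i,p) G))"
proof -
  define pp where "pp F = (THE p. (i,p) \<in> F)" for F :: "('n \<times> 'n) set"
  let ?S = "Sigma {G\<in>FS W k. i \<notin> Domain G} (\<lambda>G. {p. (i,p) \<in> arcs W \<and> rt G p \<noteq> i})"
  let ?T = "{F\<in>FS W (Suc k). i \<in> Domain F}"
  have "(\<Sum>(G,p)\<in>?S. h (insert (i,p) G)) = (\<Sum>F\<in>?T. h F)"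
  proof (rule sum.reindex_bij_witness[where i="\<lambda>F. (F - {(i, pp F)}, pp F)" and j="\<lambda>x. insert (i, snd x) (fst x)"])
    fix a assume a: "a \<in> ?S"
    obtain G p where ap: "a = (G,p)" by (cases a)
    have G: "fr G" "i \<notin> Domain G" "(i,p) \<in> arcs W" "rt G p \<noteq> i" "G \<subseteq> arcs W" "card G = k"
      using a ap by (auto simp: FS_def)
    have pp: "pp (insert (i,p) G) = p" unfolding pp_def using G(2) by blast
    have nin: "(i,p) \<notin> G" using G(2) by blast
    show "(insert (i, snd a) (fst a) - {(i, pp (insert (i, snd a) (fst a)))},
          pp (insert (i, snd a) (fst a))) = a"
      using ap pp nin by simp
    show "insert (i, snd a) (fst a) \<in> ?T"
      using ap G nin insert_fr(1)[OF G(1) G(2) G(4)] by (simp add: FS_def)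
    show "h (insert (i, snd a) (fst a)) = (case a of (G, p) \<Rightarrow> h (insert (i, p) G))"
      using ap by simp
  next
    fix b assume b: "b \<in> ?T"
    then have F: "fr b" "i \<in> Domain b" "b \<subseteq> arcs W" "card b = Suc k" by (auto simp: FS_def)
    have m: "(i, pp b) \<in> b" unfolding pp_def by (rule pp_mem[OF F(1) F(2)])
    show "insert (i, snd (b - {(i, pp b)}, pp b)) (fst (b - {(i, pp b)}, pp b)) = b" using m by auto
    have "card (b - {(i, pp b)}) = k" using m F(4) by simp
    then show "(b - {(i, pp b)}, pp b) \<in> ?S"
      using remove_fr[OF F(1) m] m F(3) by (auto simp: FS_def)
  qed
  then show ?thesis by simp
qed

lemma antisym_sum:
  assumes "finite P"
  shows "(\<Sum>p\<in>P. \<Sum>m\<in>P. a m * a p * c * (x m - x p)) = (0::real)"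
proof -
  have "(\<Sum>p\<in>P. \<Sum>m\<in>P. a m * a p * c * x m) = (\<Sum>m\<in>P. \<Sum>p\<in>P. a m * a p * c * x m)"
    by (rule sum.swap)
  also have "\<dots> = (\<Sum>p\<in>P. \<Sum>m\<in>P. a m * a p * c * x p)"
    by (simp add: mult.commute mult.left_commute)
  finally show ?thesis by (simp add: right_diff_distrib sum_subtractf)
qed



lemma entry:
  fixes W :: "real^'n^'n"
  assumes nl: "\<And>i. W $ i $ i = 0"
  shows "Qmat W (Suc k) $ i $ j - (if i = j then sigma W (Suc k) else 0)
         = (\<Sum>m\<in>UNIV. W $ i $ m * (Qmat W k $ m $ j - Qmat W k $ i $ j))"
proof -
  define a where "a m = W $ i $ m" for m
  define wt where "wt = sg_weight W"
  define \<delta> where "\<delta> = (if i = j then 1 else 0::real)"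
  define P where "P G = {p. (i,p) \<in> arcs W \<and> rt G p \<noteq> i}" for G
  have finP: "finite (P G)" for G by simp
  have arcs_iff: "(i,m) \<in> arcs W \<longleftrightarrow> a m \<noteq> 0" for m by (simp add: arcs_def a_def)
  have wins: "wt (insert (i,p) G) = a p * wt G" if "i \<notin> Domain G" for G p
    unfolding wt_def sg_weight_def a_def using that by (subst prod.insert) auto
  have L0: "Qmat W (Suc k) $ i $ j - (if i = j then sigma W (Suc k) else 0)
      = (\<Sum>F\<in>FS W (Suc k). wt F * (of_bool (rt F i = j) - \<delta>))"
  proof -
    have t: "wt F * (of_bool (rt F i = j) - \<delta>) = (if rt F i = j then wt F else 0) - wt F * \<delta>" for F
      by (simp add: right_diff_distrib of_bool_def)
    have "(\<Sum>F\<in>FS W (Suc k). wt F * (of_bool (rt F i = j) - \<delta>))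
       = (\<Sum>F\<in>FS W (Suc k). if rt F i = j then wt F else 0) - (\<Sum>F\<in>FS W (Suc k). wt F) * \<delta>"
      unfolding t by (simp add: sum_subtractf sum_distrib_right)
    then show ?thesis unfolding Q_eq sigma_eq wt_def \<delta>_def by simp
  qed
  have L1: "(\<Sum>F\<in>FS W (Suc k). wt F * (of_bool (rt F i = j) - \<delta>))
      = (\<Sum>F\<in>{F\<in>FS W (Suc k). i \<in> Domain F}. wt F * (of_bool (rt F i = j) - \<delta>))"
    by (rule sum.mono_neutral_right) (auto simp: FS_def \<delta>_def rt_self)
  have L2: "\<dots> = (\<Sum>(G,p)\<in>Sigma {G\<in>FS W k. i \<notin> Domain G} P.
                 wt (insert (i,p) G) * (of_bool (rt (insert (i,p) G) i = j) - \<delta>))"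
    unfolding P_def by (rule decomp)
  have L3: "\<dots> = (\<Sum>G\<in>{G\<in>FS W k. i \<notin> Domain G}. \<Sum>p\<in>P G. a p * wt G * (of_bool (rt G p = j) - \<delta>))"
  proof -
    have "(\<Sum>G\<in>{G\<in>FS W k. i \<notin> Domain G}. \<Sum>p\<in>P G. a p * wt G * (of_bool (rt G p = j) - \<delta>))
        = (\<Sum>(G,p)\<in>Sigma {G\<in>FS W k. i \<notin> Domain G} P. a p * wt G * (of_bool (rt G p = j) - \<delta>))"
      by (rule sum.Sigma) auto
    also have "\<dots> = (\<Sum>(G,p)\<in>Sigma {G\<in>FS W k. i \<notin> Domain G} P.
                 wt (insert (i,p) G) * (of_bool (rt (insert (i,p) G) i = j) - \<delta>))"
      by (rule sum.cong) (auto simp: wins insert_fr rt_self FS_def P_def)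
    finally show ?thesis by simp
  qed
  define \<phi> where "\<phi> G = (\<Sum>m\<in>UNIV. a m * wt G * (of_bool (rt G m = j) - of_bool (rt G i = j)))" for G
  have R0: "(\<Sum>m\<in>UNIV. W $ i $ m * (Qmat W k $ m $ j - Qmat W k $ i $ j)) = (\<Sum>G\<in>FS W k. \<phi> G)"
  proof -
    have d: "Qmat W k $ m $ j - Qmat W k $ i $ j
        = (\<Sum>G\<in>FS W k. wt G * (of_bool (rt G m = j) - of_bool (rt G i = j)))" for m
      unfolding Q_eq sum_subtractf[symmetric] by (rule sum.cong) (auto simp: wt_def)
    have "(\<Sum>m\<in>UNIV. W $ i $ m * (Qmat W k $ m $ j - Qmat W k $ i $ j))
        = (\<Sum>m\<in>UNIV. \<Sum>G\<in>FS W k. a m * wt G * (of_bool (rt G m = j) - of_bool (rt G i = j)))"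
      by (simp add: d a_def sum_distrib_left mult.assoc)
    also have "\<dots> = (\<Sum>G\<in>FS W k. \<phi> G)" unfolding \<phi>_def by (rule sum.swap)
    finally show ?thesis .
  qed
  have R1: "(\<Sum>G\<in>FS W k. \<phi> G) = (\<Sum>G\<in>{G\<in>FS W k. i \<notin> Domain G}. \<phi> G) + (\<Sum>G\<in>{G\<in>FS W k. i \<in> Domain G}. \<phi> G)"
  proof -
    have "(\<Sum>G\<in>FS W k. \<phi> G) = (\<Sum>G\<in>{G\<in>FS W k. i \<notin> Domain G} \<union> {G\<in>FS W k. i \<in> Domain G}. \<phi> G)"
      by (rule sum.cong) auto
    also have "\<dots> = (\<Sum>G\<in>{G\<in>FS W k. i \<notin> Domain G}. \<phi> G) + (\<Sum>G\<in>{G\<in>FS W k. i \<in> Domain G}. \<phi> G)"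
      by (rule sum.union_disjoint) auto
    finally show ?thesis .
  qed
  have P1: "(\<Sum>G\<in>{G\<in>FS W k. i \<notin> Domain G}. \<phi> G)
     = (\<Sum>G\<in>{G\<in>FS W k. i \<notin> Domain G}. \<Sum>p\<in>P G. a p * wt G * (of_bool (rt G p = j) - \<delta>))"
  proof (rule sum.cong[OF refl])
    fix G assume "G \<in> {G\<in>FS W k. i \<notin> Domain G}"
    then have G: "fr G" "i \<notin> Domain G" by (auto simp: FS_def)
    have "\<phi> G = (\<Sum>m\<in>UNIV. a m * wt G * (of_bool (rt G m = j) - \<delta>))"
      unfolding \<phi>_def \<delta>_def using rt_self[OF G] by simp
    also have "\<dots> = (\<Sum>m\<in>P G. a m * wt G * (of_bool (rt G m = j) - \<delta>))"
      by (rule sum.mono_neutral_right) (auto simp: P_def arcs_iff \<delta>_def)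
    finally show "\<phi> G = (\<Sum>p\<in>P G. a p * wt G * (of_bool (rt G p = j) - \<delta>))" .
  qed
  have P2: "(\<Sum>G\<in>{G\<in>FS W k. i \<in> Domain G}. \<phi> G) = 0"
  proof (cases k)
    case 0
    then have "{G\<in>FS W k. i \<in> Domain G} = {}" by (auto simp: FS_def)
    then show ?thesis by (simp only: sum.empty)
  next
    case (Suc k')
    have "(\<Sum>G\<in>{G\<in>FS W k. i \<in> Domain G}. \<phi> G)
        = (\<Sum>(G,p)\<in>Sigma {G\<in>FS W k'. i \<notin> Domain G} P. \<phi> (insert (i,p) G))"
      unfolding Suc P_def by (rule decomp)
    also have "\<dots> = (\<Sum>G\<in>{G\<in>FS W k'. i \<notin> Domain G}. \<Sum>p\<in>P G. \<phi> (insert (i,p) G))"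
      by (rule sum.Sigma[symmetric]) auto
    also have "\<dots> = (\<Sum>G\<in>{G\<in>FS W k'. i \<notin> Domain G}. \<Sum>p\<in>P G. \<Sum>m\<in>P G.
                 a m * a p * wt G * (of_bool (rt G m = j) - of_bool (rt G p = j)))"
    proof (intro sum.cong refl)
      fix G p assume G: "G \<in> {G\<in>FS W k'. i \<notin> Domain G}" and p: "p \<in> P G"
      have fr: "fr G" "i \<notin> Domain G" "rt G p \<noteq> i" using G p by (auto simp: FS_def P_def)
      have ri: "rt (insert (i,p) G) x = (if rt G x = i then rt G p else rt G x)" for x
        by (rule insert_fr(2)[OF fr])
      have "\<phi> (insert (i,p) G) = (\<Sum>m\<in>UNIV. a m * a p * wt G *
               (of_bool (rt (insert (i,p) G) m = j) - of_bool (rt G p = j)))"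
        unfolding \<phi>_def wins[OF fr(2)] using ri[of i] rt_self[OF fr(1) fr(2)] by (simp add: mult.assoc)
      also have "\<dots> = (\<Sum>m\<in>P G. a m * a p * wt G * (of_bool (rt G m = j) - of_bool (rt G p = j)))"
        by (rule sum.mono_neutral_cong_right) (auto simp: P_def arcs_iff ri)
      finally show "\<phi> (insert (i,p) G) = (\<Sum>m\<in>P G. a m * a p * wt G * (of_bool (rt G m = j) - of_bool (rt G p = j)))" .
    qed
    also have "\<dots> = 0"
    proof (rule sum.neutral, rule ballI)
      fix G
      show "(\<Sum>p\<in>P G. \<Sum>m\<in>P G. a m * a p * wt G * (of_bool (rt G m = j) - of_bool (rt G p = j))) = 0"
        using antisym_sum[OF finP, of a "wt G" "\<lambda>m. of_bool (rt G m = j)"] by simp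
    qed
    finally show ?thesis .
  qed
  show ?thesis using L0 L1 L2 L3 R0 R1 P1 P2 by simp
qed



lemma lap_row:
  fixes W :: "real^'n^'n"
  assumes nl: "\<And>i. W $ i $ i = 0"
  shows "(\<Sum>m\<in>UNIV. (- laplacian W) $ i $ m * q m) = (\<Sum>m\<in>UNIV. W $ i $ m * (q m - q i))"
proof -
  have s0: "(\<Sum>k\<in>UNIV-{i}. W$i$k) = (\<Sum>k\<in>UNIV. W$i$k)"
    using sum.remove[of UNIV i "\<lambda>k. W$i$k"] nl by simp
  have s1: "(\<Sum>m\<in>UNIV-{i}. W$i$m * q m) = (\<Sum>m\<in>UNIV. W$i$m * q m)"
    using sum.remove[of UNIV i "\<lambda>m. W$i$m * q m"] nl by simp
  have s2: "(\<Sum>m\<in>UNIV-{i}. (- laplacian W) $ i $ m * q m) = (\<Sum>m\<in>UNIV-{i}. W$i$m * q m)"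
    by (rule sum.cong) (auto simp: laplacian_def)
  have "(\<Sum>m\<in>UNIV. (- laplacian W) $ i $ m * q m)
      = (- laplacian W) $ i $ i * q i + (\<Sum>m\<in>UNIV-{i}. (- laplacian W) $ i $ m * q m)"
    by (rule sum.remove) auto
  also have "\<dots> = - (\<Sum>k\<in>UNIV. W$i$k) * q i + (\<Sum>m\<in>UNIV. W$i$m * q m)"
  proof -
    have ii: "(- laplacian W) $ i $ i = - (\<Sum>k\<in>UNIV-{i}. W$i$k)" by (simp add: laplacian_def)
    show ?thesis unfolding ii s2 s0 s1 by simp
  qed
  also have "\<dots> = (\<Sum>m\<in>UNIV. W $ i $ m * (q m - q i))"
    by (simp add: sum_subtractf right_diff_distrib sum_distrib_right)
  finally show ?thesis .
qed

lemma card_roots: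
  fixes F :: "('n::finite \<times> 'n) set"
  assumes F: "fr F"
  shows "real (card {v. rt F v = v}) = real CARD('n) - real (card F)"
proof -
  have sv: "single_valued F" using F fr_def by blast
  have "{v. rt F v = v} = UNIV - Domain F"
  proof -
    have "rt F v = v \<longleftrightarrow> v \<notin> Domain F" for v
    proof
      assume "rt F v = v" then show "v \<notin> Domain F" using rt[OF F, of v] by simp
    next
      assume "v \<notin> Domain F" then show "rt F v = v" by (rule rt_self[OF F])
    qed
    then show ?thesis by blast
  qed
  moreover have "card (Domain F) = card F"
  proof -
    have "inj_on fst F" using sv unfolding inj_on_def single_valued_def by auto
    then show ?thesis by (simp add: Domain_fst card_image)
  qed
  moreover have "card (Domain F) \<le> CARD('n)" by (rule card_mono) auto
  ultimately show ?thesis by (simp add: card_Diff_subset of_nat_diff)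
qed

lemma diag_sum:
  fixes W :: "real^'n^'n"
  shows "(\<Sum>i\<in>UNIV. Qmat W k $ i $ i) = (real CARD('n) - real k) * sigma W k"
proof -
  have "(\<Sum>i\<in>UNIV. Qmat W k $ i $ i) = (\<Sum>i\<in>UNIV. \<Sum>F\<in>FS W k. if rt F i = i then sg_weight W F else 0)"
    by (simp add: Q_eq)
  also have "\<dots> = (\<Sum>F\<in>FS W k. \<Sum>i\<in>UNIV. if rt F i = i then sg_weight W F else 0)"
    by (rule sum.swap)
  also have "\<dots> = (\<Sum>F\<in>FS W k. (real CARD('n) - real k) * sg_weight W F)"
  proof (rule sum.cong[OF refl])
    fix F assume "F \<in> FS W k"
    then have F: "fr F" "card F = k" by (auto simp: FS_def)
    have "(\<Sum>i\<in>UNIV. if rt F i = i then sg_weight W F else 0) = (\<Sum>i\<in>{v. rt F v = v}. sg_weight W F)"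
      by (simp add: sum.If_cases)
    also have "\<dots> = real (card {v. rt F v = v}) * sg_weight W F" by simp
    finally show "(\<Sum>i\<in>UNIV. if rt F i = i then sg_weight W F else 0) = (real CARD('n) - real k) * sg_weight W F"
      using card_roots[OF F(1)] F(2) by simp
  qed
  finally show ?thesis by (simp add: sigma_eq sum_distrib_left)
qed

theorem proposition4:
  fixes W :: "real^'n^'n"
  assumes n_gt1: "CARD('n) > 1"
    and no_loops: "\<And>i. W $ i $ i = 0"
    and nonneg: "\<And>i j. W $ i $ j \<ge> 0"
  shows "Qmat W (k+1) = (- laplacian W) ** Qmat W k + sigma W (k+1) *\<^sub>R mat 1
       \<and> sigma W (k+1) = trace (laplacian W ** Qmat W k) / real (k+1)"
proof
  have E: "(\<Sum>m\<in>UNIV. (- laplacian W) $ i $ m * Qmat W k $ m $ j)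
      = Qmat W (Suc k) $ i $ j - (if i = j then sigma W (Suc k) else 0)" for i j
    using entry[OF no_loops, of k i j] lap_row[OF no_loops, of i "\<lambda>m. Qmat W k $ m $ j"] by simp
  show "Qmat W (k+1) = (- laplacian W) ** Qmat W k + sigma W (k+1) *\<^sub>R mat 1"
  proof (simp only: vec_eq_iff, intro allI)
    fix i j
    have "((- laplacian W) ** Qmat W k + sigma W (k+1) *\<^sub>R mat 1) $ i $ j
        = (\<Sum>m\<in>UNIV. (- laplacian W) $ i $ m * Qmat W k $ m $ j) + (if i = j then sigma W (Suc k) else 0)"
      unfolding matrix_matrix_mult_def mat_def by simp
    then show "Qmat W (k + 1) $ i $ j = ((- laplacian W) ** Qmat W k + sigma W (k + 1) *\<^sub>R mat 1) $ i $ j"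
      using E[of i j] by simp
  qed
  have T: "trace (laplacian W ** Qmat W k) = (\<Sum>i\<in>UNIV. sigma W (Suc k) - Qmat W (Suc k) $ i $ i)"
    unfolding trace_def
  proof (rule sum.cong[OF refl])
    fix i
    have "(laplacian W ** Qmat W k) $ i $ i = - (\<Sum>m\<in>UNIV. (- laplacian W) $ i $ m * Qmat W k $ m $ i)"
      unfolding matrix_matrix_mult_def by (simp add: sum_negf)
    then show "(laplacian W ** Qmat W k) $ i $ i = sigma W (Suc k) - Qmat W (Suc k) $ i $ i"
      using E[of i i] by simp
  qed
  also have "\<dots> = real CARD('n) * sigma W (Suc k) - (real CARD('n) - real (Suc k)) * sigma W (Suc k)"
    using diag_sum[of W "Suc k"] by (simp add: sum_subtractf)
  also have "\<dots> = real (k+1) * sigma W (k+1)" by (simp add: algebra_simps)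
  finally show "sigma W (k+1) = trace (laplacian W ** Qmat W k) / real (k+1)" by simp
qed

end
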